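(* Let $r\ge1$ and let $\mathbf{Y}^r$ be the $r$-fold Cartesian product of Young's lattice, with $p_n$ its number of rank-$n$ elements ($p_k=0$ for $k<0$, $\Delta p_n=p_n-p_{n-1}$). Then for every $n\ge1$ and $1\le j\le n$, $\Delta p_n\ge\Delta p_{n-j-\delta_{r,1}}$ (that is, $\Delta p_n\ge\Delta p_{n-j-1}$ if $r=1$ and $\Delta p_n\ge\Delta p_{n-j}$ if $r\ge2$).
   Context: Young's lattice $\mathbf{Y}$ is the set of all integer partitions ordered by inclusion of Ferrers (Young) diagrams, graded by the size of the partition; it is a $1$-differential poset. $\mathbf{Y}^r$ carries the componentwise order and the rank is the total size; it is $r$-differential. $\delta_{r,1}$ is the Kronecker delta. *)

theory Defs
  imports Main
begin

definition is_partition :: "nat list \<Rightarrow> bool" where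
  "is_partition la \<longleftrightarrow> sorted (rev la) \<and> (\<forall>x\<in>set la. 0 < x)"

definition rank_elems :: "nat \<Rightarrow> nat \<Rightarrow> nat list list set" where
  "rank_elems r n = {ps. length ps = r \<and> (\<forall>la\<in>set ps. is_partition la)
                        \<and> sum_list (map sum_list ps) = n}"

definition p :: "nat \<Rightarrow> int \<Rightarrow> int" where
  "p r k = (if k < 0 then 0 else int (card (rank_elems r (nat k))))"

definition Delta_p :: "nat \<Rightarrow> int \<Rightarrow> int" where
  "Delta_p r k = p r k - p r (k - 1)"

definition kdelta :: "nat \<Rightarrow> nat \<Rightarrow> int" where
  "kdelta a b = (if a = b then 1 else 0)"

end

theory Submission
  imports Defs
begin

lemma part_pos: "is_partition la \<Longrightarrow> x \<in> set la \<Longrightarrow> 0 < x"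
  by (auto simp: is_partition_def)

lemma part_app1: "is_partition la \<Longrightarrow> is_partition (la @ [1])"
  by (auto simp: is_partition_def Suc_le_eq)

lemma part_butlast:
  assumes "is_partition la" "1 \<in> set la"
  shows "la = butlast la @ [1] \<and> is_partition (butlast la)"
proof -
  obtain ys z where la: "la = ys @ [z]"
    using assms(2) by (cases la rule: rev_exhaust) auto
  have s: "sorted (z # rev ys)" and pos: "\<forall>x\<in>set (ys@[z]). 0 < x"
    using assms(1) la by (auto simp: is_partition_def)
  have z1: "z = 1"
  proof -
    have "\<forall>y\<in>set ys. z \<le> y" using s by simp
    then have "z \<le> 1" using assms(2) la by auto
    then show ?thesis using pos by auto
  qed
  show ?thesis using la z1 s pos by (auto simp: is_partition_def)
qed

lemma len_le_sum: "\<forall>x\<in>set la. 0 < (x::nat) \<Longrightarrow> length la \<le> sum_list la"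
  by (induction la) auto

lemma finite_rank: "finite (rank_elems r n)"
proof -
  define P where "P = {la::nat list. set la \<subseteq> {0..n} \<and> length la \<le> n}"
  have fP: "finite P" unfolding P_def by (rule finite_lists_length_le) simp
  have "rank_elems r n \<subseteq> {ps. set ps \<subseteq> P \<and> length ps \<le> r}"
  proof
    fix ps assume ps: "ps \<in> rank_elems r n"
    have "la \<in> P" if "la \<in> set ps" for la
    proof -
      have "sum_list la \<le> n" using ps that member_le_sum_list[of "sum_list la" "map sum_list ps"]
        by (auto simp: rank_elems_def)
      moreover have "length la \<le> sum_list la"
        using ps that by (intro len_le_sum) (auto simp: rank_elems_def is_partition_def)
      moreover have "x \<le> sum_list la" if "x \<in> set la" for x
        using that member_le_sum_list by blast
      ultimately show ?thesis unfolding P_def by fastforce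
    qed
    then show "ps \<in> {ps. set ps \<subseteq> P \<and> length ps \<le> r}" using ps by (auto simp: rank_elems_def)
  qed
  moreover have "finite {ps. set ps \<subseteq> P \<and> length ps \<le> r}"
    by (rule finite_lists_length_le[OF fP])
  ultimately show ?thesis by (rule finite_subset)
qed

definition B :: "nat \<Rightarrow> nat \<Rightarrow> nat list list set" where
  "B r n = {ps \<in> rank_elems r n. 1 \<notin> set (hd ps)}"

definition f1 :: "nat list list \<Rightarrow> nat list list" where
  "f1 ps = (hd ps @ [1]) # tl ps"

lemma rank_cons: "r \<ge> 1 \<Longrightarrow> ps \<in> rank_elems r n \<Longrightarrow> \<exists>la rest. ps = la # rest"
  by (cases ps) (auto simp: rank_elems_def)

lemma decomp:
  assumes "r \<ge> 1"
  shows "rank_elems r (Suc n) = f1 ` rank_elems r n \<union> B r (Suc n)"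
    and "f1 ` rank_elems r n \<inter> B r (Suc n) = {}"
    and "inj_on f1 (rank_elems r n)"
proof -
  show "rank_elems r (Suc n) = f1 ` rank_elems r n \<union> B r (Suc n)"
  proof (intro equalityI subsetI)
    fix ps assume ps: "ps \<in> rank_elems r (Suc n)"
    show "ps \<in> f1 ` rank_elems r n \<union> B r (Suc n)"
    proof (cases "1 \<in> set (hd ps)")
      case False then show ?thesis using ps by (auto simp: B_def)
    next
      case True
      obtain la rest where pe: "ps = la # rest" using rank_cons[OF assms ps] by blast
      have pla: "is_partition la" using ps pe by (auto simp: rank_elems_def)
      from part_butlast[OF pla] True pe
      have d: "la = butlast la @ [1]" "is_partition (butlast la)" by auto
      have "(butlast la # rest) \<in> rank_elems r n"
        using ps pe d arg_cong[OF d(1), of sum_list] by (auto simp: rank_elems_def)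
      moreover have "ps = f1 (butlast la # rest)" using pe d by (simp add: f1_def)
      ultimately show ?thesis by blast
    qed
  next
    fix ps assume "ps \<in> f1 ` rank_elems r n \<union> B r (Suc n)"
    then show "ps \<in> rank_elems r (Suc n)"
    proof
      assume "ps \<in> f1 ` rank_elems r n"
      then obtain qs where qs: "qs \<in> rank_elems r n" "ps = f1 qs" by blast
      obtain la rest where qe: "qs = la # rest" using rank_cons[OF assms qs(1)] by blast
      show ?thesis using qs qe part_app1 by (auto simp: rank_elems_def f1_def)
    qed (auto simp: B_def)
  qed
  show "f1 ` rank_elems r n \<inter> B r (Suc n) = {}"
    by (auto simp: B_def f1_def)
  show "inj_on f1 (rank_elems r n)"
  proof (rule inj_onI)
    fix ps qs assume a: "ps \<in> rank_elems r n" "qs \<in> rank_elems r n" "f1 ps = f1 qs"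
    obtain la rest where pe: "ps = la # rest" using rank_cons[OF assms a(1)] by blast
    obtain mu rest' where qe: "qs = mu # rest'" using rank_cons[OF assms a(2)] by blast
    show "ps = qs" using a(3) pe qe by (simp add: f1_def)
  qed
qed

lemma card_suc:
  assumes "r \<ge> 1"
  shows "card (rank_elems r (Suc n)) = card (rank_elems r n) + card (B r (Suc n))"
proof -
  have fB: "finite (B r (Suc n))" using finite_rank[of r "Suc n"] by (rule rev_finite_subset) (auto simp: B_def)
  have "card (rank_elems r (Suc n)) = card (f1 ` rank_elems r n) + card (B r (Suc n))"
    unfolding decomp(1)[OF assms] using decomp(2)[OF assms] fB finite_rank
    by (intro card_Un_disjoint) auto
  also have "card (f1 ` rank_elems r n) = card (rank_elems r n)"
    using decomp(3)[OF assms] by (rule card_image)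
  finally show ?thesis .
qed

lemma zero_parts: "\<forall>x\<in>set la. 0 < (x::nat) \<Longrightarrow> sum_list la = 0 \<Longrightarrow> la = []"
  by (cases la) auto

lemma B0: assumes "r \<ge> 1" shows "B r 0 = rank_elems r 0"
proof -
  have "1 \<notin> set (hd ps)" if ps: "ps \<in> rank_elems r 0" for ps
  proof -
    obtain la rest where pe: "ps = la # rest" using rank_cons[OF assms ps] by blast
    have "la = []" using ps pe by (intro zero_parts) (auto simp: rank_elems_def is_partition_def)
    then show ?thesis using pe by simp
  qed
  then show ?thesis by (auto simp: B_def)
qed

lemma Delta_B:
  assumes "r \<ge> 1" "k \<ge> 0"
  shows "Delta_p r k = int (card (B r (nat k)))"
proof (cases "k = 0")
  case True then show ?thesis using B0[OF assms(1)] by (simp add: Delta_p_def p_def)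
next
  case False
  then obtain m where k: "k = int (Suc m)" using assms(2)
    by (metis int_ops(1) nat_0_le nat_int not0_implies_Suc)
  have e1: "nat (k - 1) = m" "nat k = Suc m" "\<not> k - 1 < 0" "\<not> k < 0" using k by auto
  show ?thesis unfolding Delta_p_def p_def using e1 card_suc[OF assms(1), of m] by simp
qed

lemma finite_B: "finite (B r n)"
  using finite_rank[of r n] by (rule rev_finite_subset) (auto simp: B_def)

lemma mono_from:
  fixes f :: "nat \<Rightarrow> nat"
  assumes "\<And>k. a \<le> k \<Longrightarrow> f k \<le> f (Suc k)" "a \<le> m" "m \<le> n"
  shows "f m \<le> f n"
  using assms(3)
proof (induction n rule: dec_induct)
  case base then show ?case by simp
next
  case (step k) then show ?case using assms(1)[of k] assms(2) by simp
qed

lemma mono2: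
  assumes "r \<ge> 2"
  shows "card (B r n) \<le> card (B r (Suc n))"
proof -
  define g where "g ps = hd ps # (hd (tl ps) @ [1]) # tl (tl ps)" for ps :: "nat list list"
  have ex: "\<exists>la mu rest. ps = la # mu # rest" if "ps \<in> B r m" for ps m
    using that assms by (cases ps; cases "tl ps") (auto simp: B_def rank_elems_def)
  have "inj_on g (B r n)"
  proof (rule inj_onI)
    fix ps qs assume a: "ps \<in> B r n" "qs \<in> B r n" "g ps = g qs"
    obtain la mu rest where pe: "ps = la # mu # rest" using ex[OF a(1)] by blast
    obtain la' mu' rest' where qe: "qs = la' # mu' # rest'" using ex[OF a(2)] by blast
    show "ps = qs" using a(3) pe qe by (simp add: g_def)
  qed
  moreover have "g ` B r n \<subseteq> B r (Suc n)"
  proof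
    fix x assume "x \<in> g ` B r n"
    then obtain ps where ps: "ps \<in> B r n" "x = g ps" by blast
    obtain la mu rest where pe: "ps = la # mu # rest" using ex[OF ps(1)] by blast
    show "x \<in> B r (Suc n)" using ps pe part_app1[of mu]
      by (auto simp: g_def B_def rank_elems_def)
  qed
  ultimately show ?thesis using card_inj_on_le finite_B by blast
qed

lemma mono1:
  assumes "n \<ge> 1"
  shows "card (B 1 n) \<le> card (B 1 (Suc n))"
proof -
  define g where "g ps = ((hd (hd ps) + 1) # tl (hd ps)) # tl ps" for ps :: "nat list list"
  have ex: "\<exists>x xs. ps = [x # xs]" if "ps \<in> B 1 n" for ps
  proof -
    have "length ps = 1" using that by (auto simp: B_def rank_elems_def)
    then obtain la where la: "ps = [la]" by (auto simp: length_Suc_conv)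
    have "la \<noteq> []" using that la assms by (auto simp: B_def rank_elems_def)
    then show ?thesis using la by (cases la) auto
  qed
  have "inj_on g (B 1 n)"
  proof (rule inj_onI)
    fix ps qs assume a: "ps \<in> B 1 n" "qs \<in> B 1 n" "g ps = g qs"
    obtain x xs where pe: "ps = [x # xs]" using ex[OF a(1)] by blast
    obtain y ys where qe: "qs = [y # ys]" using ex[OF a(2)] by blast
    show "ps = qs" using a(3) pe qe by (simp add: g_def)
  qed
  moreover have "g ` B 1 n \<subseteq> B 1 (Suc n)"
  proof
    fix z assume "z \<in> g ` B 1 n"
    then obtain ps where ps: "ps \<in> B 1 n" "z = g ps" by blast
    obtain x xs where pe: "ps = [x # xs]" using ex[OF ps(1)] by blast
    have "is_partition (x # xs)" "1 \<notin> set (x#xs)" "x + sum_list xs = n"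
      using ps pe by (auto simp: B_def rank_elems_def)
    then have "is_partition (Suc x # xs)"
      by (auto simp: is_partition_def sorted_append)
    moreover have "0 < x" using part_pos[of "x#xs" x] \<open>is_partition (x # xs)\<close> by simp
    ultimately show "z \<in> B 1 (Suc n)" using ps pe
      by (auto simp: g_def B_def rank_elems_def)
  qed
  ultimately show ?thesis using card_inj_on_le finite_B by blast
qed

lemma B1_pos: assumes "n \<ge> 2" shows "card (B 1 n) \<ge> 1"
proof -
  have "[[n]] \<in> B 1 n" using assms by (auto simp: B_def rank_elems_def is_partition_def)
  then have "B 1 n \<noteq> {}" by blast
  then show ?thesis using finite_B by (simp add: Suc_le_eq card_gt_0_iff)
qed

lemma B10: "card (B 1 0) \<le> 1"
proof -
  have "B 1 0 \<subseteq> {[[]]}"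
  proof
    fix ps assume ps: "ps \<in> B 1 0"
    have "length ps = 1" using ps by (auto simp: B_def rank_elems_def)
    then obtain la where la: "ps = [la]" by (auto simp: length_Suc_conv)
    have "la = []" using ps la by (intro zero_parts) (auto simp: B_def rank_elems_def is_partition_def)
    then show "ps \<in> {[[]]}" using la by simp
  qed
  then show ?thesis by (metis card.empty card.insert card_mono finite.emptyI finite.insertI empty_iff One_nat_def)
qed

theorem proposition6p4:
  fixes r :: nat and n j :: int
  assumes "r \<ge> 1" and "n \<ge> 1" and "1 \<le> j" and "j \<le> n"
  shows "Delta_p r n \<ge> Delta_p r (n - j - kdelta r 1)"
proof (cases "r = 1")
  case False
  then have r2: "r \<ge> 2" using assms(1) by simp
  have kd: "kdelta r 1 = 0" using False by (simp add: kdelta_def)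
  define m where "m = n - j"
  have m0: "m \<ge> 0" "m \<le> n" using assms m_def by auto
  have "card (B r (nat m)) \<le> card (B r (nat n))"
    using mono_from[of 0 "\<lambda>k. card (B r k)" "nat m" "nat n"] mono2[OF r2] m0 by simp
  then show ?thesis using Delta_B[OF assms(1) m0(1)] Delta_B[OF assms(1)] assms(2) kd m_def by simp
next
  case True
  have kd: "kdelta r 1 = 1" using True by (simp add: kdelta_def)
  define m where "m = n - j - 1"
  have m0: "m \<ge> -1" "m \<le> n - 2" using assms m_def by auto
  have Dn: "Delta_p r n = int (card (B 1 (nat n)))" using Delta_B[OF assms(1)] assms(2) True by simp
  consider "m = -1" | "m = 0" | "m \<ge> 1" using m0 by linarith
  then show ?thesis
  proof cases
    case 1
    then have "Delta_p r m = 0" by (simp add: Delta_p_def p_def)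
    then show ?thesis using Dn kd m_def by simp
  next
    case 2
    have "Delta_p r m \<le> 1" using Delta_B[OF assms(1), of m] 2 True B10 by simp
    moreover have "nat n \<ge> 2" using m0 2 by linarith
    ultimately show ?thesis using Dn kd m_def B1_pos by fastforce
  next
    case 3
    have "card (B 1 (nat m)) \<le> card (B 1 (nat n))"
      using mono_from[of 1 "\<lambda>k. card (B 1 k)" "nat m" "nat n"] mono1 m0 3 by simp
    then show ?thesis using Delta_B[OF assms(1), of m] 3 Dn True kd m_def by simp
  qed
qed

end
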